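(* Consider a single-relay network with no direct source–destination link. Let $q$ be a prime power, $K\ge1$, $N_{\mathrm S}\ge K$, $N_{\mathrm R}\ge 1$. A source S draws $N_{\mathrm S}$ coefficient vectors i.i.d. uniformly from $\mathbb{F}_q^K$ and sends one packet per vector to a relay R, each packet erased independently with probability $\epsilon_{\mathrm{SR}}$ (independently of the coefficients); the destination D receives nothing from S. R, having received $m_1$ packets with coefficient matrix $\mathbf{C}_{\mathrm S\to\mathrm R}\in\mathbb{F}_q^{m_1\times K}$, draws $\mathbf{G}\in\mathbb{F}_q^{N_{\mathrm R}\times m_1}$ with i.i.d. uniform entries and transmits the $N_{\mathrm R}$ rows of $\mathbf{G}\mathbf{C}_{\mathrm S\to\mathrm R}$ to D, each erased independently with probability $\epsilon_{\mathrm{RD}}$. Decoding succeeds iff the received recoded coefficient vectors span a space of rank $K$. Then the probability of successful decoding equals $$P^{(1)}_{\mathrm R}=P(N_{\mathrm S},\epsilon_{\mathrm{SR}})\,P(N_{\mathrm R},\epsilon_{\mathrm{RD}}),\qquad\text{where } P(N,\epsilon)=\sum_{k=K}^{N}\binom{N}{k}(1-\epsilon)^k\epsilon^{N-k}\prod_{i=0}^{K-1}\left(1-q^{i-k}\right),$$ with $P(N,\epsilon):=0$ if $N<K$.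
   Context: $P(N,\epsilon)$ is the probability that, of $N$ packets carrying i.i.d. uniform coefficient vectors in $\mathbb{F}_q^K$ each independently erased with probability $\epsilon$, the received ones have rank $K$. *)

theory Defs
  imports "HOL-Analysis.Analysis" "HOL-Probability.Probability"
begin

definition P_link :: "nat \<Rightarrow> nat \<Rightarrow> nat \<Rightarrow> real \<Rightarrow> real" where
  "P_link q K N eps =
     (\<Sum>k=K..N. real (N choose k) * (1 - eps) ^ k * eps ^ (N - k) *
        (\<Prod>i<K. 1 - real q powi (int i - int k)))"

definition lincomb :: "'a::field list \<Rightarrow> ('a ^ 'n) list \<Rightarrow> 'a ^ 'n" where
  "lincomb g cs = sum_list (map2 (\<lambda>a c. a *s c) g cs)"

definition relay_experiment ::
  "nat \<Rightarrow> nat \<Rightarrow> real \<Rightarrow> real \<Rightarrow> ('a::{finite,field} ^ 'n::finite) list pmf" where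
  "relay_experiment NS NR eSR eRD = do {
     S \<leftarrow> replicate_pmf NS (pair_pmf (pmf_of_set (UNIV :: ('a ^ 'n) set)) (bernoulli_pmf eSR));
     let C = map fst (filter (\<lambda>(v, e). \<not> e) S);
     G \<leftarrow> replicate_pmf NR (pair_pmf (replicate_pmf (length C) (pmf_of_set (UNIV :: 'a set)))
                                       (bernoulli_pmf eRD));
     return_pmf (map (\<lambda>g. lincomb g C) (map fst (filter (\<lambda>(g, e). \<not> e) G)))
   }"

end

theory Submission
  imports Defs
begin

lemma card_span_indep:
  fixes B :: "('a::{finite,field} ^ 'n::finite) set"
  assumes "finite B" "vec.independent B"
  shows "card (vec.span B) = CARD('a) ^ card B"
  using assms
proof (induction B rule: finite_induct)
  case empty
  then show ?case by simp
next
  case (insert b B)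
  have nb: "b \<notin> vec.span B" using insert.prems insert.hyps
    using vec.independent_insert[of b B] by simp
  have iB: "vec.independent B" using insert.prems vec.independent_mono by blast
  have eq: "vec.span (insert b B) = (\<lambda>(a,y). a *s b + y) ` (UNIV \<times> vec.span B)"
  proof safe
    fix x assume "x \<in> vec.span (insert b B)"
    then obtain k where "x - k *s b \<in> vec.span B" unfolding vec.span_insert by blast
    then show "x \<in> (\<lambda>(a,y). a *s b + y) ` (UNIV \<times> vec.span B)"
      by (intro image_eqI[of _ _ "(k, x - k *s b)"]) auto
  next
    fix a y assume "y \<in> vec.span B"
    then show "a *s b + y \<in> vec.span (insert b B)"
      by (meson insertI1 subset_insertI vec.span_add vec.span_base vec.span_mono vec.span_scale subsetD)
  qed
  have inj: "inj_on (\<lambda>(a,y). a *s b + y) (UNIV \<times> vec.span B)"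
  proof (rule inj_onI, clarify)
    fix a y a' y' assume y: "y \<in> vec.span B" "y' \<in> vec.span B" and e: "a *s b + y = a' *s b + y'"
    have h1: "(a - a') *s b = y' - y" using e by (simp add: algebra_simps vector_sub_rdistrib)
    have h2: "y' - y \<in> vec.span B" using y vec.span_diff by blast
    have "a = a'"
    proof (rule ccontr)
      assume h3: "a \<noteq> a'"
      have i1: "inverse (a - a') * (a - a') = 1" using h3 by simp
      have "b = inverse (a - a') *s ((a - a') *s b)" by (simp only: vec.scale_scale i1 vec.scale_one)
      also have "\<dots> \<in> vec.span B" unfolding h1 by (rule vec.span_scale[OF h2])
      finally show False using nb by simp
    qed
    then show "a = a' \<and> y = y'" using e by simp
  qed
  have "card (vec.span (insert b B)) = CARD('a) * card (vec.span B)"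
    unfolding eq card_image[OF inj] by (simp add: card_cartesian_product)
  then show ?case using insert iB by simp
qed

lemma card_span:
  fixes S :: "('a::{finite,field} ^ 'n::finite) set"
  shows "card (vec.span S) = CARD('a) ^ vec.dim S"
proof -
  obtain B where B: "B \<subseteq> S" "vec.independent B" "S \<subseteq> vec.span B" "card B = vec.dim S"
    using vec.basis_exists by blast
  have "vec.span B = vec.span S"
    using vec.span_mono[OF B(1)] vec.span_mono[OF B(3)] by (simp add: vec.span_span)
  moreover have "finite B" using B(2) vec.finiteI_independent by blast
  ultimately show ?thesis using card_span_indep[of B] B(2) B(4) by metis
qed

lemma prob_bind_pmf:
  "measure_pmf.prob (bind_pmf M f) A = measure_pmf.expectation M (\<lambda>x. measure_pmf.prob (f x) A)"
  unfolding measure_pmf_bind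
  by (rule measure_pmf.measure_bind[where N="count_space UNIV"]) (auto simp: measurable_def space_subprob_algebra measure_pmf_in_subprob_algebra intro: prob_space_imp_subprob_space measure_pmf.prob_space_axioms)

definition fr :: "real \<Rightarrow> nat \<Rightarrow> nat \<Rightarrow> real" where
  "fr q k d = (\<Prod>j<d. 1 - q^j / q^k)"

lemma fr_0[simp]: "fr q k 0 = 1" by (simp add: fr_def)
lemma fr_0S: "fr q 0 (Suc d) = 0" unfolding fr_def prod.lessThan_Suc_shift by simp

lemma fr_rec:
  assumes "q > 0"
  shows "fr q (Suc k) (Suc d) = fr q k (Suc d) / q^(Suc d) + (1 - 1/q^(Suc d)) * fr q k d"
proof -
  have a: "fr q (Suc k) (Suc d) = (1 - 1/q^(Suc k)) * fr q k d"
    unfolding fr_def prod.lessThan_Suc_shift using assms by (simp add: field_simps)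
  have b: "fr q k (Suc d) = fr q k d * (1 - q^d/q^k)"
    unfolding fr_def by simp
  have c: "q^d/q^k/q^(Suc d) = 1/q^(Suc k)" using assms by (simp add: field_simps)
  have e: "(1 - q^d/q^k)/q^(Suc d) + (1 - 1/q^(Suc d)) = 1 - 1/q^(Suc k)"
    using c by (simp add: diff_divide_distrib)
  have "fr q k d * (1 - q^d/q^k) / q^(Suc d) + (1 - 1/q^(Suc d)) * fr q k d
     = fr q k d * ((1 - q^d/q^k)/q^(Suc d) + (1 - 1/q^(Suc d)))"
    by (simp add: distrib_left mult.commute)
  then show ?thesis unfolding a b e by (simp add: mult.commute)
qed

lemma aux: "(A::real) > 0 \<Longrightarrow> B > 0 \<Longrightarrow> (A*F1 + (A*B - A)*F0)/(A*B) = F1/B + (1 - 1/B)*F0"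
  by (simp add: field_simps)

lemma rank_prob:
  fixes S :: "('a::{finite,field} ^ 'n::finite) set"
  shows "measure_pmf.prob (replicate_pmf k (pmf_of_set (UNIV :: ('a ^ 'n) set)))
            {vs. vec.dim (S \<union> set vs) = CARD('n)} = fr (CARD('a)) k (CARD('n) - vec.dim S)"
proof (induction k arbitrary: S)
  case 0
  have "vec.dim S \<le> CARD('n)" by (rule dim_subset_UNIV_cart_gen)
  then show ?case
  proof (cases "vec.dim S = CARD('n)")
    case False
    then obtain d where "CARD('n) - vec.dim S = Suc d" using \<open>vec.dim S \<le> CARD('n)\<close>
      by (metis Suc_diff_Suc le_neq_implies_less)
    then show ?thesis using False by (simp add: indicator_def fr_0S)
  qed (simp add: indicator_def)
next
  case (Suc k)
  let ?U = "pmf_of_set (UNIV :: ('a ^ 'n) set)"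
  let ?q = "real CARD('a)"
  let ?K = "CARD('n)"
  define dS where "dS = vec.dim S"
  have dle: "dS \<le> ?K" unfolding dS_def by (rule dim_subset_UNIV_cart_gen)
  have cU: "card (UNIV :: ('a ^ 'n) set) = CARD('a) ^ ?K"
    using card_span[of "UNIV :: ('a ^ 'n) set"] by (simp add: vec_dim_card)
  have cS: "card (vec.span S) = CARD('a) ^ dS" unfolding dS_def by (rule card_span)
  have inner: "measure_pmf.prob (replicate_pmf k ?U \<bind> (\<lambda>xs. return_pmf (x # xs)))
        {vs. vec.dim (S \<union> set vs) = ?K} = fr ?q k (?K - vec.dim (insert x S))" for x
  proof -
    have "measure_pmf.prob (replicate_pmf k ?U \<bind> (\<lambda>xs. return_pmf (x # xs)))
        {vs. vec.dim (S \<union> set vs) = ?K} =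
        measure_pmf.prob (replicate_pmf k ?U) {vs. vec.dim (insert x S \<union> set vs) = ?K}"
      by (simp add: map_pmf_def[symmetric] vimage_def)
    then show ?thesis using Suc.IH[of "insert x S"] by simp
  qed
  have "measure_pmf.prob (replicate_pmf (Suc k) ?U) {vs. vec.dim (S \<union> set vs) = ?K}
      = measure_pmf.expectation ?U (\<lambda>x. fr ?q k (?K - vec.dim (insert x S)))"
    unfolding replicate_pmf.simps(2) prob_bind_pmf[of ?U] inner ..
  also have "\<dots> = (\<Sum>x\<in>UNIV. fr ?q k (?K - vec.dim (insert x S))) / ?q ^ ?K"
    by (simp add: integral_pmf_of_set cU)
  also have "(\<Sum>x\<in>UNIV. fr ?q k (?K - vec.dim (insert x S))) =
      (\<Sum>x\<in>vec.span S. fr ?q k (?K - vec.dim (insert x S))) +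
      (\<Sum>x\<in>UNIV - vec.span S. fr ?q k (?K - vec.dim (insert x S)))"
    by (metis add.commute finite sum.subset_diff top_greatest)
  also have "(\<Sum>x\<in>vec.span S. fr ?q k (?K - vec.dim (insert x S))) = ?q ^ dS * fr ?q k (?K - dS)"
  proof -
    have "(\<Sum>x\<in>vec.span S. fr ?q k (?K - vec.dim (insert x S))) = (\<Sum>x\<in>vec.span S. fr ?q k (?K - dS))"
      by (intro sum.cong) (auto simp: vec.dim_insert dS_def)
    also have "\<dots> = real (card (vec.span S)) * fr ?q k (?K - dS)" by simp
    finally show ?thesis using cS by simp
  qed
  also have "(\<Sum>x\<in>UNIV - vec.span S. fr ?q k (?K - vec.dim (insert x S))) =
       (?q ^ ?K - ?q ^ dS) * fr ?q k (?K - Suc dS)"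
  proof -
    have "(\<Sum>x\<in>UNIV - vec.span S. fr ?q k (?K - vec.dim (insert x S))) =
       (\<Sum>x\<in>UNIV - vec.span S. fr ?q k (?K - Suc dS))"
      by (intro sum.cong) (auto simp: vec.dim_insert dS_def)
    also have "\<dots> = real (card (UNIV - vec.span S)) * fr ?q k (?K - Suc dS)" by simp
    also have "card (UNIV - vec.span S) = CARD('a) ^ ?K - CARD('a) ^ dS"
      using cU cS by (simp add: card_Diff_subset)
    also have "real (CARD('a) ^ ?K - CARD('a) ^ dS) = ?q ^ ?K - ?q ^ dS"
      using dle by (simp add: of_nat_diff power_increasing)
    finally show ?thesis .
  qed
  finally have eq: "measure_pmf.prob (replicate_pmf (Suc k) ?U) {vs. vec.dim (S \<union> set vs) = ?K} =
     (?q ^ dS * fr ?q k (?K - dS) + (?q ^ ?K - ?q ^ dS) * fr ?q k (?K - Suc dS)) / ?q ^ ?K" .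
  have qpos: "?q > 0" by simp
  show ?case
  proof (cases "dS = ?K")
    case True
    then show ?thesis unfolding eq dS_def[symmetric] using qpos by simp
  next
    case False
    then obtain d where d: "?K - dS = Suc d" using dle by (metis Suc_diff_Suc le_neq_implies_less)
    have KS: "?K = dS + Suc d" using d dle by simp
    have "?K - Suc dS = d" using d by simp
    then have "(?q ^ dS * fr ?q k (?K - dS) + (?q ^ ?K - ?q ^ dS) * fr ?q k (?K - Suc dS)) / ?q ^ ?K
       = fr ?q k (Suc d) / ?q^(Suc d) + (1 - 1/?q^(Suc d)) * fr ?q k d"
    proof -
      have p: "?q ^ ?K = ?q ^ dS * ?q ^ Suc d" unfolding KS by (simp add: power_add)
      show ?thesis unfolding d \<open>?K - Suc dS = d\<close> p
        by (rule aux) (use qpos in simp_all)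
    qed
    then show ?thesis unfolding eq dS_def[symmetric] d fr_rec[OF qpos] by simp
  qed
qed

lemma bern_flip:
  assumes "0 \<le> e" "e \<le> 1"
  shows "bind_pmf (bernoulli_pmf (1 - e)) f = bind_pmf (bernoulli_pmf e) (\<lambda>b. f (\<not> b))"
  by (rule pmf_eqI) (use assms in \<open>simp add: pmf_bind algebra_simps\<close>)

lemma rep_Suc_map: "replicate_pmf (Suc k) p = bind_pmf p (\<lambda>v. map_pmf (Cons v) (replicate_pmf k p))"
  by (simp add: map_pmf_def)

lemma filter_binomial:
  assumes "0 \<le> e" "e \<le> 1"
  shows "map_pmf (\<lambda>S. map fst (filter (\<lambda>(v,b). \<not> b) S)) (replicate_pmf N (pair_pmf p (bernoulli_pmf e)))
         = bind_pmf (binomial_pmf N (1 - e)) (\<lambda>k. replicate_pmf k p)"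
proof (induction N)
  case 0
  then show ?case using assms by (simp add: binomial_pmf_0 bind_return_pmf)
next
  case (Suc N)
  define F where "F = (\<lambda>S. map fst (filter (\<lambda>(v::'a,b). \<not> b) S))"
  define M where "M = bind_pmf (binomial_pmf N (1 - e)) (\<lambda>k. replicate_pmf k p)"
  have IH: "map_pmf F (replicate_pmf N (pair_pmf p (bernoulli_pmf e))) = M"
    using Suc.IH unfolding F_def M_def .
  have FC: "F (x # S) = (if snd x then F S else fst x # F S)" for x S
    unfolding F_def by (cases x) auto
  have "map_pmf F (replicate_pmf (Suc N) (pair_pmf p (bernoulli_pmf e)))
      = bind_pmf (pair_pmf p (bernoulli_pmf e)) (\<lambda>x. map_pmf (\<lambda>C. if snd x then C else fst x # C)
            (map_pmf F (replicate_pmf N (pair_pmf p (bernoulli_pmf e)))))"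
    unfolding rep_Suc_map map_bind_pmf pmf.map_comp o_def FC ..
  also have "\<dots> = bind_pmf (pair_pmf p (bernoulli_pmf e)) (\<lambda>x. map_pmf (\<lambda>C. if snd x then C else fst x # C) M)"
    unfolding IH ..
  also have "\<dots> = bind_pmf p (\<lambda>v. bind_pmf (bernoulli_pmf e) (\<lambda>b. map_pmf (\<lambda>C. if b then C else v # C) M))"
    unfolding pair_pmf_def bind_assoc_pmf bind_return_pmf fst_conv snd_conv ..
  also have "\<dots> = bind_pmf (bernoulli_pmf e) (\<lambda>b. bind_pmf p (\<lambda>v. map_pmf (\<lambda>C. if b then C else v # C) M))"
    by (rule bind_commute_pmf)
  also have "\<dots> = bind_pmf (bernoulli_pmf e) (\<lambda>b. bind_pmf (binomial_pmf N (1 - e))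
                    (\<lambda>k. replicate_pmf ((if \<not> b then 1 else 0) + k) p))"
  proof (intro bind_pmf_cong refl)
    fix b :: bool
    show "bind_pmf p (\<lambda>v. map_pmf (\<lambda>C. if b then C else v # C) M) =
          bind_pmf (binomial_pmf N (1 - e)) (\<lambda>k. replicate_pmf ((if \<not> b then 1 else 0) + k) p)"
    proof (cases b)
      case True
      then show ?thesis by (simp add: M_def)
    next
      case False
      have "bind_pmf p (\<lambda>v. map_pmf (Cons v) M) =
            bind_pmf p (\<lambda>v. bind_pmf (binomial_pmf N (1 - e)) (\<lambda>k. map_pmf (Cons v) (replicate_pmf k p)))"
        unfolding M_def map_bind_pmf ..
      also have "\<dots> = bind_pmf (binomial_pmf N (1 - e)) (\<lambda>k. bind_pmf p (\<lambda>v. map_pmf (Cons v) (replicate_pmf k p)))"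
        by (rule bind_commute_pmf)
      also have "\<dots> = bind_pmf (binomial_pmf N (1 - e)) (\<lambda>k. replicate_pmf (Suc k) p)"
        unfolding rep_Suc_map ..
      finally show ?thesis using False by simp
    qed
  qed
  also have "\<dots> = bind_pmf (bernoulli_pmf (1 - e)) (\<lambda>c. bind_pmf (binomial_pmf N (1 - e))
                    (\<lambda>k. replicate_pmf ((if c then 1 else 0) + k) p))"
    by (rule bern_flip[symmetric]) (use assms in auto)
  also have "\<dots> = bind_pmf (binomial_pmf (Suc N) (1 - e)) (\<lambda>k. replicate_pmf k p)"
    using assms by (simp add: binomial_pmf_Suc bind_assoc_pmf bind_return_pmf)
  finally show ?case unfolding F_def .
qed

lemma fr_zero_lt: "k < d \<Longrightarrow> q > 0 \<Longrightarrow> fr q k d = 0"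
  unfolding fr_def by (rule prod_zero) (auto intro!: bexI[of _ k])

lemma P_link_fr:
  assumes "q > 0"
  shows "P_link q K N e = (\<Sum>k\<le>N. real (N choose k) * (1 - e) ^ k * e ^ (N - k) * fr (real q) k K)"
proof -
  have pr: "(\<Prod>i<K. 1 - real q powi (int i - int k)) = fr (real q) k K" for k
    unfolding fr_def using assms by (intro prod.cong refl) (simp add: power_int_diff)
  have "P_link q K N e = (\<Sum>k=K..N. real (N choose k) * (1 - e) ^ k * e ^ (N - k) * fr (real q) k K)"
    unfolding P_link_def pr ..
  also have "\<dots> = (\<Sum>k\<le>N. real (N choose k) * (1 - e) ^ k * e ^ (N - k) * fr (real q) k K)"
    by (rule sum.mono_neutral_left) (use assms in \<open>auto simp: fr_zero_lt\<close>)
  finally show ?thesis .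
qed

lemma link_prob:
  assumes "0 \<le> e" "e \<le> 1"
  shows "measure_pmf.prob (replicate_pmf N (pair_pmf (pmf_of_set (UNIV :: ('a::{finite,field} ^ 'n::finite) set)) (bernoulli_pmf e)))
           {S. vec.dim (set (map fst (filter (\<lambda>(v,b). \<not> b) S))) = CARD('n)}
         = P_link CARD('a) CARD('n) N e"
proof -
  let ?U = "pmf_of_set (UNIV :: ('a ^ 'n) set)"
  let ?F = "\<lambda>S. map fst (filter (\<lambda>(v::'a^'n,b). \<not> b) S)"
  let ?B = "binomial_pmf N (1 - e)"
  have "measure_pmf.prob (replicate_pmf N (pair_pmf ?U (bernoulli_pmf e)))
           {S. vec.dim (set (?F S)) = CARD('n)}
      = measure_pmf.prob (map_pmf ?F (replicate_pmf N (pair_pmf ?U (bernoulli_pmf e))))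
           {C. vec.dim (set C) = CARD('n)}"
    by (simp add: vimage_def)
  also have "\<dots> = measure_pmf.prob (bind_pmf ?B (\<lambda>k. replicate_pmf k ?U)) {C. vec.dim (set C) = CARD('n)}"
    unfolding filter_binomial[OF assms] ..
  also have "\<dots> = measure_pmf.expectation ?B (\<lambda>k. fr (CARD('a)) k CARD('n))"
    unfolding prob_bind_pmf using rank_prob[where S="{}" and 'a='a and 'n='n] by simp
  also have "\<dots> = (\<Sum>k\<le>N. fr (CARD('a)) k CARD('n) * pmf ?B k)"
    by (rule integral_measure_pmf_real) (use assms in \<open>auto simp: set_pmf_binomial_eq split: if_splits\<close>)
  also have "\<dots> = P_link CARD('a) CARD('n) N e"
    unfolding P_link_fr[of "CARD('a)", OF zero_less_card_finite] using assms
    by (intro sum.cong refl) (simp add: algebra_simps)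
  finally show ?thesis .
qed

lemma dim_full_iff: "vec.dim (S :: ('a::field ^ 'n::finite) set) = CARD('n) \<longleftrightarrow> vec.span S = UNIV"
  by (metis vec.dim_eq_full vec_dim_card vec.dim_UNIV vec.dimension_def)

lemma lincomb_Nil[simp]: "lincomb [] C = 0" "lincomb g [] = 0"
  unfolding lincomb_def by simp_all

lemma lincomb_Cons[simp]: "lincomb (a # g) (c # C) = a *s c + lincomb g C"
  unfolding lincomb_def by simp

lemma lincomb_span: "lincomb g C \<in> vec.span (set C)"
proof (induction C arbitrary: g)
  case Nil then show ?case by (simp add: vec.span_zero)
next
  case (Cons c C)
  show ?case
  proof (cases g)
    case Nil then show ?thesis by (simp add: vec.span_zero)
  next
    case (Cons a g')
    have "lincomb g' C \<in> vec.span (set (c # C))"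
      using Cons.IH[of g'] vec.span_mono[of "set C" "set (c # C)"] by auto
    moreover have "a *s c \<in> vec.span (set (c # C))"
      by (intro vec.span_scale vec.span_base) simp
    ultimately show ?thesis using Cons by (simp add: vec.span_add)
  qed
qed

lemma lincomb_surj: "x \<in> vec.span (set C) \<Longrightarrow> \<exists>g. length g = length C \<and> lincomb g C = x"
proof (induction C arbitrary: x)
  case Nil then show ?case by simp
next
  case (Cons c C)
  then obtain k where "x - k *s c \<in> vec.span (set C)"
    using vec.span_insert[of c "set C"] by auto
  then obtain g where "length g = length C" "lincomb g C = x - k *s c" using Cons.IH by blast
  then show ?case by (intro exI[of _ "k # g"]) auto
qed

lemma lincomb_add: "length h = length C \<Longrightarrow> length g = length C \<Longrightarrow>
    lincomb (map2 (+) h g) C = lincomb h C + lincomb g C"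
proof (induction C arbitrary: h g)
  case Nil then show ?case by simp
next
  case (Cons c C)
  then obtain a h' b g' where "h = a # h'" "g = b # g'" by (metis length_Suc_conv)
  then show ?case using Cons by (simp add: vec.scale_left_distrib algebra_simps)
qed

lemma rep_shift:
  fixes h :: "'a::{finite,ab_group_add} list"
  shows "length h = m \<Longrightarrow> map_pmf (\<lambda>g. map2 (+) h g) (replicate_pmf m (pmf_of_set UNIV)) = replicate_pmf m (pmf_of_set UNIV)"
proof (induction m arbitrary: h)
  case 0 then show ?case by simp
next
  case (Suc m)
  then obtain a h' where h: "h = a # h'" "length h' = m" by (metis length_Suc_conv)
  have U: "map_pmf ((+) a) (pmf_of_set (UNIV :: 'a set)) = pmf_of_set UNIV"
  proof -
    have "inj ((+) a)" by (simp add: inj_def)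
    moreover have "surj ((+) a)" by (rule surjI[of _ "\<lambda>y. y - a"]) simp
    ultimately show ?thesis by (simp add: map_pmf_of_set_inj)
  qed
  have "map_pmf (\<lambda>g. map2 (+) h g) (replicate_pmf (Suc m) (pmf_of_set UNIV)) =
      bind_pmf (pmf_of_set UNIV) (\<lambda>x. map_pmf (Cons (a + x)) (map_pmf (\<lambda>g. map2 (+) h' g) (replicate_pmf m (pmf_of_set UNIV))))"
    unfolding rep_Suc_map map_bind_pmf pmf.map_comp o_def h by simp
  also have "\<dots> = bind_pmf (pmf_of_set UNIV) (\<lambda>x. map_pmf (Cons (a + x)) (replicate_pmf m (pmf_of_set UNIV)))"
    unfolding Suc.IH[OF h(2)] ..
  also have "\<dots> = bind_pmf (map_pmf ((+) a) (pmf_of_set UNIV)) (\<lambda>y. map_pmf (Cons y) (replicate_pmf m (pmf_of_set UNIV)))"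
    unfolding bind_map_pmf ..
  also have "\<dots> = replicate_pmf (Suc m) (pmf_of_set UNIV)"
    unfolding U rep_Suc_map ..
  finally show ?case .
qed

lemma lincomb_uniform:
  fixes C :: "('a::{finite,field} ^ 'n::finite) list"
  assumes sp: "vec.span (set C) = UNIV"
  shows "map_pmf (\<lambda>g. lincomb g C) (replicate_pmf (length C) (pmf_of_set UNIV)) = pmf_of_set UNIV"
proof -
  define R where "R = replicate_pmf (length C) (pmf_of_set (UNIV :: 'a set))"
  define D where "D = map_pmf (\<lambda>g. lincomb g C) R"
  have setR: "set_pmf R \<subseteq> {g. length g = length C}"
    unfolding R_def set_replicate_pmf by auto
  have shift: "map_pmf ((+) x) D = D" for x
  proof -
    obtain h where h: "length h = length C" "lincomb h C = x" using lincomb_surj[of x C] sp by auto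
    have "map_pmf ((+) x) D = map_pmf (\<lambda>g. lincomb (map2 (+) h g) C) R"
      unfolding D_def pmf.map_comp o_def
      by (intro map_pmf_cong refl) (use setR h in \<open>auto simp: lincomb_add\<close>)
    also have "\<dots> = map_pmf (\<lambda>g. lincomb g C) (map_pmf (\<lambda>g. map2 (+) h g) R)"
      by (simp add: pmf.map_comp o_def)
    also have "\<dots> = D" unfolding R_def rep_shift[OF h(1)] D_def R_def ..
    finally show ?thesis .
  qed
  have const: "pmf D x = pmf D 0" for x
  proof -
    have "pmf D x = pmf (map_pmf ((+) x) D) (x + 0)" using shift[of x] by simp
    also have "\<dots> = pmf D 0" by (rule pmf_map_inj') (simp add: inj_def)
    finally show ?thesis .
  qed
  have s1: "(\<Sum>x\<in>UNIV. pmf D x) = 1" by (rule sum_pmf_eq_1) auto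
  have "(\<Sum>x\<in>UNIV. pmf D x) = (\<Sum>x\<in>(UNIV::('a^'n) set). pmf D 0)" by (intro sum.cong refl const)
  also have "\<dots> = real CARD('a ^ 'n) * pmf D 0" by (simp only: sum_constant)
  finally have "real CARD('a ^ 'n) * pmf D 0 = 1" using s1 by linarith
  then have p0: "pmf D 0 = 1 / real CARD('a ^ 'n)" by (simp add: field_simps)
  show ?thesis unfolding D_def[symmetric] R_def[symmetric]
  proof (rule pmf_eqI)
    fix x
    show "pmf D x = pmf (pmf_of_set UNIV) x" unfolding const[of x] p0 by simp
  qed
qed

lemma map_rep: "map_pmf (map f) (replicate_pmf n p) = replicate_pmf n (map_pmf f p)"
proof (induction n)
  case 0 then show ?case by simp
next
  case (Suc n)
  have "map_pmf (map f) (replicate_pmf (Suc n) p) =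
        bind_pmf p (\<lambda>x. map_pmf (Cons (f x)) (map_pmf (map f) (replicate_pmf n p)))"
    unfolding rep_Suc_map map_bind_pmf pmf.map_comp o_def by simp
  also have "\<dots> = bind_pmf (map_pmf f p) (\<lambda>y. map_pmf (Cons y) (replicate_pmf n (map_pmf f p)))"
    unfolding Suc.IH bind_map_pmf ..
  finally show ?case unfolding rep_Suc_map .
qed

lemma filter_map_pairs:
  "map L (map fst (filter (\<lambda>(g,e). \<not> e) G)) = map fst (filter (\<lambda>(v,e). \<not> e) (map (\<lambda>(g,e). (L g, e)) G))"
  by (induction G) auto

definition inner_exp :: "nat \<Rightarrow> real \<Rightarrow> ('a::{finite,field} ^ 'n::finite) list \<Rightarrow> ('a ^ 'n) list pmf" where
  "inner_exp NR eRD C = map_pmf (\<lambda>G. map (\<lambda>g. lincomb g C) (map fst (filter (\<lambda>(g, e). \<not> e) G)))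
      (replicate_pmf NR (pair_pmf (replicate_pmf (length C) (pmf_of_set (UNIV :: 'a set))) (bernoulli_pmf eRD)))"

lemma relay_unfold:
  "relay_experiment NS NR eSR eRD =
     bind_pmf (replicate_pmf NS (pair_pmf (pmf_of_set (UNIV :: ('a::{finite,field} ^ 'n::finite) set)) (bernoulli_pmf eSR)))
       (\<lambda>S. inner_exp NR eRD (map fst (filter (\<lambda>(v, e). \<not> e) S)))"
  unfolding relay_experiment_def inner_exp_def Let_def map_pmf_def ..

lemma inner_prob:
  fixes C :: "('a::{finite,field} ^ 'n::finite) list"
  assumes "0 \<le> eRD" "eRD \<le> 1"
  shows "measure_pmf.prob (inner_exp NR eRD C) {out. vec.dim (set out) = CARD('n)} =
         (if vec.dim (set C) = CARD('n) then P_link CARD('a) CARD('n) NR eRD else 0)"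
proof (cases "vec.dim (set C) = CARD('n)")
  case True
  then have sp: "vec.span (set C) = UNIV" using dim_full_iff by blast
  let ?L = "\<lambda>g. lincomb g C"
  have "inner_exp NR eRD C = map_pmf (\<lambda>S. map fst (filter (\<lambda>(v, e). \<not> e) S))
      (map_pmf (map (\<lambda>(g,e). (?L g, e)))
        (replicate_pmf NR (pair_pmf (replicate_pmf (length C) (pmf_of_set (UNIV :: 'a set))) (bernoulli_pmf eRD))))"
    unfolding inner_exp_def pmf.map_comp o_def filter_map_pairs[of ?L] ..
  also have "\<dots> = map_pmf (\<lambda>S. map fst (filter (\<lambda>(v, e). \<not> e) S))
      (replicate_pmf NR (pair_pmf (pmf_of_set UNIV) (bernoulli_pmf eRD)))"
  proof -
    have "map_pmf (\<lambda>(g,e). (?L g, e)) (pair_pmf (replicate_pmf (length C) (pmf_of_set (UNIV :: 'a set))) (bernoulli_pmf eRD))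
        = pair_pmf (map_pmf ?L (replicate_pmf (length C) (pmf_of_set (UNIV :: 'a set)))) (map_pmf id (bernoulli_pmf eRD))"
      unfolding map_pair[symmetric] id_def ..
    also have "\<dots> = pair_pmf (pmf_of_set UNIV) (bernoulli_pmf eRD)"
      unfolding lincomb_uniform[OF sp] by simp
    finally show ?thesis unfolding map_rep by simp
  qed
  finally have "measure_pmf.prob (inner_exp NR eRD C) {out. vec.dim (set out) = CARD('n)} =
      measure_pmf.prob (replicate_pmf NR (pair_pmf (pmf_of_set (UNIV :: ('a ^ 'n) set)) (bernoulli_pmf eRD)))
           {S. vec.dim (set (map fst (filter (\<lambda>(v,b). \<not> b) S))) = CARD('n)}"
    by (simp add: vimage_def)
  then show ?thesis using link_prob[OF assms] True by simp
next
  case False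
  have "vec.dim (set C) \<le> CARD('n)" by (rule dim_subset_UNIV_cart_gen)
  with False have lt: "vec.dim (set C) < CARD('n)" by simp
  have "vec.dim (set (map (\<lambda>g. lincomb g C) xs)) \<le> vec.dim (set C)" for xs
    by (rule vec.dim_mono) (auto intro: lincomb_span)
  with lt have "vec.dim (set (map (\<lambda>g. lincomb g C) xs)) \<noteq> CARD('n)" for xs
    by (metis not_le order.strict_trans1 less_irrefl)
  then have e: "(\<lambda>G. map (\<lambda>g. lincomb g C) (map fst (filter (\<lambda>(g, e). \<not> e) G))) -`
      {out. vec.dim (set out) = CARD('n)} = {}" by blast
  show ?thesis using False unfolding inner_exp_def measure_map_pmf e by simp
qed

theorem mainTheorem5:
  fixes q K NS NR :: nat and eSR eRD :: real
  assumes "q = CARD('a::{finite,field})"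
      and "K = CARD('n::finite)"
      and "NS \<ge> K" and "NR \<ge> 1"
      and "0 \<le> eSR" and "eSR \<le> 1" and "0 \<le> eRD" and "eRD \<le> 1"
  shows "measure_pmf.prob (relay_experiment NS NR eSR eRD :: ('a ^ 'n) list pmf)
            {out. vec.dim (set out) = K}
         = P_link q K NS eSR * P_link q K NR eRD"
proof -
  let ?M = "replicate_pmf NS (pair_pmf (pmf_of_set (UNIV :: ('a ^ 'n) set)) (bernoulli_pmf eSR))"
  let ?F = "\<lambda>S. map fst (filter (\<lambda>(v::'a^'n, e). \<not> e) S)"
  let ?A = "{S. vec.dim (set (?F S)) = CARD('n)}"
  let ?c = "P_link CARD('a) CARD('n) NR eRD"
  have "measure_pmf.prob (relay_experiment NS NR eSR eRD :: ('a ^ 'n) list pmf)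
            {out. vec.dim (set out) = CARD('n)}
      = measure_pmf.expectation ?M (\<lambda>S. measure_pmf.prob (inner_exp NR eRD (?F S)) {out. vec.dim (set out) = CARD('n)})"
    unfolding relay_unfold prob_bind_pmf ..
  also have "\<dots> = measure_pmf.expectation ?M (\<lambda>S. ?c * indicator ?A S)"
    by (intro Bochner_Integration.integral_cong refl) (use assms(7,8) in \<open>simp add: inner_prob indicator_def\<close>)
  also have "\<dots> = ?c * measure_pmf.prob ?M ?A"
    by simp
  also have "measure_pmf.prob ?M ?A = P_link CARD('a) CARD('n) NS eSR"
    by (rule link_prob) (use assms(5,6) in auto)
  finally show ?thesis using assms(1,2) by simp
qed


end
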